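(* Let $n,N\in\mathbb N$, $I=\{1,\dots,n\}$, $J=\{1,\dots,N\}$, $G$ a nonempty finite set of maps $I\to J$ with normalized counting measure $\mathbb P$ and expectation $\mathbb E$, such that $\mathbb P(\{g\in G:g(i)=j\})=1/N$ for all $i\in I$, $j\in J$. Let $a\in\mathbb R^{n\times N}$. Then for every integer $1\le\ell\le n$, $$\mathbb E\sum_{k=1}^{\ell}\operatorname{k\text{-}max}_{1\le i\le n}|a_{ig(i)}|\le\frac2N\|a\|_{M_{\ell N}},$$ where $a$ is regarded as a vector in $\mathbb R^{nN}$ and $M_{\ell N}(t)=0$ for $0\le t\le 1/(\ell N)$, $M_{\ell N}(t)=t-1/(\ell N)$ for $t>1/(\ell N)$.
   Context: $\mathbb P(E)=|E|/|G|$ for $E\subseteq G$. For a vector $x$ with non-negative entries, $\operatorname{k\text{-}max}_{1\le i\le n}x_i$ denotes its $k$-th largest entry counted with multiplicity. For an Orlicz function $M$ (a convex, non-constant function $M:[0,\infty)\to[0,\infty)$ with $M(0)=0$), the Luxemburg norm on $\mathbb R^m$ is $\|x\|_M=\inf\{\lambda>0:\sum_{i=1}^mM(|x_i|/\lambda)\le1\}$. *)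

theory Defs
  imports "HOL-Analysis.Analysis" "HOL-Library.FuncSet"
begin

definition kmax :: "nat \<Rightarrow> real list \<Rightarrow> real" where
  "kmax k xs = rev (sort xs) ! (k - 1)"

definition luxemburg_norm :: "(real \<Rightarrow> real) \<Rightarrow> 'i set \<Rightarrow> ('i \<Rightarrow> real) \<Rightarrow> real" where
  "luxemburg_norm M S x = Inf {c. c > 0 \<and> (\<Sum>i\<in>S. M (\<bar>x i\<bar> / c)) \<le> 1}"

definition M_orl :: "nat \<Rightarrow> real \<Rightarrow> real" where
  "M_orl m t = (if t \<le> 1 / real m then 0 else t - 1 / real m)"

end

theory Submission imports Defs begin
lemma kmax_sum_bound:
  fixes xs :: "real list" and d :: real
  assumes "l \<le> length xs"
  shows "(\<Sum>k=1..l. kmax k xs) \<le> real l * d + sum_list (map (\<lambda>y. max 0 (y - d)) xs)"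
proof -
  define ys where "ys = rev (sort xs)"
  define f where "f = (\<lambda>y::real. max 0 (y - d))"
  have len: "length ys = length xs" by (simp add: ys_def)
  have "(\<Sum>k=1..l. kmax k xs) = (\<Sum>k<l. ys ! k)"
  proof (cases l)
    case 0 then show ?thesis by simp
  next
    case (Suc l')
    have "(\<Sum>k=1..l. kmax k xs) = (\<Sum>k=0..l'. kmax (Suc k) xs)"
      using sum.atLeast_Suc_atMost_Suc_shift[of "\<lambda>k. kmax k xs" 0 l'] Suc by (simp add: comp_def)
    also have "\<dots> = (\<Sum>k<l. ys ! k)" using Suc
      by (simp add: kmax_def ys_def atLeast0AtMost lessThan_Suc_atMost)
    finally show ?thesis .
  qed
  also have "\<dots> \<le> (\<Sum>k<l. d + f (ys ! k))"
    by (rule sum_mono) (simp add: f_def)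
  also have "\<dots> = real l * d + (\<Sum>k<l. f (ys ! k))" by (simp add: sum.distrib)
  also have "(\<Sum>k<l. f (ys ! k)) \<le> (\<Sum>k<length ys. f (ys ! k))"
    by (rule sum_mono2) (use assms len in \<open>auto simp: f_def\<close>)
  also have "(\<Sum>k<length ys. f (ys ! k)) = sum_list (map f ys)"
    by (simp add: sum_list_sum_nth atLeast0LessThan)
  also have "sum_list (map f ys) = sum_list (map f xs)"
  proof -
    have "mset (map f ys) = mset (map f xs)" by (simp add: ys_def)
    then show ?thesis by (metis sum_mset_sum_list)
  qed
  finally show ?thesis by (simp add: f_def)
qed

theorem proposition4p2:
  fixes n N l :: nat and G :: "(nat \<Rightarrow> nat) set" and a :: "nat \<Rightarrow> nat \<Rightarrow> real"
  assumes G_sub: "G \<subseteq> {1..n} \<rightarrow>\<^sub>E {1..N}"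
    and G_ne: "G \<noteq> {}"
    and G_fin: "finite G"
    and unif: "\<forall>i\<in>{1..n}. \<forall>j\<in>{1..N}.
                 real (card {g\<in>G. g i = j}) / real (card G) = 1 / real N"
    and l: "1 \<le> l" "l \<le> n"
  shows "(1 / real (card G)) *
           (\<Sum>g\<in>G. \<Sum>k=1..l. kmax k (map (\<lambda>i. \<bar>a i (g i)\<bar>) [1..<n+1]))
         \<le> 2 / real N * luxemburg_norm (M_orl (l * N)) ({1..n} \<times> {1..N}) (\<lambda>(i,j). a i j)"
proof -
  define I where "I = {1..n}"
  define J where "J = {1..N}"
  define m where "m = l * N"
  define S where "S = {c. c > 0 \<and> (\<Sum>x\<in>I \<times> J. M_orl m (\<bar>(\<lambda>(i,j). a i j) x\<bar> / c)) \<le> 1}"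
  define LHS where "LHS = (1 / real (card G)) *
           (\<Sum>g\<in>G. \<Sum>k=1..l. kmax k (map (\<lambda>i. \<bar>a i (g i)\<bar>) [1..<n+1]))"
  obtain g0 where g0: "g0 \<in> G" using G_ne by blast
  have "g0 1 \<in> {1..N}" using G_sub g0 l by (auto simp: PiE_def Pi_def)
  then have N1: "N \<ge> 1" by simp
  have m0: "real m > 0" using N1 l by (simp add: m_def)
  have cG: "real (card G) > 0" using G_ne G_fin by (simp add: card_gt_0_iff)
  have key: "LHS \<le> 2 / real N * c" if cS: "c \<in> S" for c
  proof -
    have c0: "c > 0" and sumM: "(\<Sum>x\<in>I \<times> J. M_orl m (\<bar>(\<lambda>(i,j). a i j) x\<bar> / c)) \<le> 1"
      using cS by (auto simp: S_def)
    define d where "d = c / real m"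
    define h where "h = (\<lambda>i j. max 0 (\<bar>a i j\<bar> - d))"
    have hM: "h i j = c * M_orl m (\<bar>a i j\<bar> / c)" for i j
      using c0 m0 by (auto simp: h_def M_orl_def d_def field_simps)
    have ld: "real l * d = c / real N" using l N1 by (simp add: d_def m_def)
    have bound_g: "(\<Sum>k=1..l. kmax k (map (\<lambda>i. \<bar>a i (g i)\<bar>) [1..<n+1]))
        \<le> real l * d + (\<Sum>i\<in>I. h i (g i))" for g
    proof -
      have "(\<Sum>k=1..l. kmax k (map (\<lambda>i. \<bar>a i (g i)\<bar>) [1..<n+1]))
          \<le> real l * d + sum_list (map (\<lambda>y. max 0 (y - d)) (map (\<lambda>i. \<bar>a i (g i)\<bar>) [1..<n+1]))"
        by (rule kmax_sum_bound) (use l in simp)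
      also have "sum_list (map (\<lambda>y. max 0 (y - d)) (map (\<lambda>i. \<bar>a i (g i)\<bar>) [1..<n+1]))
          = sum_list (map (\<lambda>i. h i (g i)) [1..<n+1])"
        by (simp only: map_map comp_def h_def)
      also have "\<dots> = sum (\<lambda>i. h i (g i)) (set [1..<n+1])"
        by (rule sum_set_upt_conv_sum_list_nat[symmetric])
      also have "\<dots> = (\<Sum>i\<in>I. h i (g i))"
      proof -
        have "set [1..<n+1] = I" by (auto simp: I_def)
        then show ?thesis by (simp only:)
      qed
      finally show ?thesis .
    qed
    have avg: "(\<Sum>g\<in>G. \<Sum>i\<in>I. h i (g i)) = real (card G) / real N * (\<Sum>i\<in>I. \<Sum>j\<in>J. h i j)"
    proof -
      have "(\<Sum>g\<in>G. \<Sum>i\<in>I. h i (g i)) = (\<Sum>i\<in>I. \<Sum>g\<in>G. h i (g i))"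
        by (rule sum.swap)
      also have "\<dots> = (\<Sum>i\<in>I. \<Sum>j\<in>J. real (card G) / real N * h i j)"
      proof (rule sum.cong[OF refl])
        fix i assume i: "i \<in> I"
        have "(\<Sum>g\<in>G. h i (g i)) = (\<Sum>j\<in>J. \<Sum>g\<in>{g\<in>G. g i = j}. h i (g i))"
          by (rule sum.group[symmetric]) (use G_fin G_sub i in \<open>auto simp: J_def I_def PiE_def Pi_def\<close>)
        also have "\<dots> = (\<Sum>j\<in>J. real (card {g\<in>G. g i = j}) * h i j)"
          by (rule sum.cong[OF refl]) simp
        also have "\<dots> = (\<Sum>j\<in>J. real (card G) / real N * h i j)"
        proof (rule sum.cong[OF refl])
          fix j assume j: "j \<in> J"
          have "real (card {g\<in>G. g i = j}) / real (card G) = 1 / real N"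
            using unif i j by (auto simp: I_def J_def)
          then have "real (card {g\<in>G. g i = j}) = real (card G) / real N"
            using cG by (simp add: field_simps)
          then show "real (card {g\<in>G. g i = j}) * h i j = real (card G) / real N * h i j" by simp
        qed
        finally show "(\<Sum>g\<in>G. h i (g i)) = (\<Sum>j\<in>J. real (card G) / real N * h i j)" .
      qed
      also have "\<dots> = real (card G) / real N * (\<Sum>i\<in>I. \<Sum>j\<in>J. h i j)"
        by (simp add: sum_distrib_left)
      finally show ?thesis .
    qed
    have hsum: "(\<Sum>i\<in>I. \<Sum>j\<in>J. h i j) \<le> c"
    proof -
      have "(\<Sum>i\<in>I. \<Sum>j\<in>J. h i j) = c * (\<Sum>x\<in>I \<times> J. M_orl m (\<bar>(\<lambda>(i,j). a i j) x\<bar> / c))"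
        by (simp add: hM sum.cartesian_product sum_distrib_left case_prod_unfold)
      also have "\<dots> \<le> c * 1" using sumM c0 by (intro mult_left_mono) auto
      finally show ?thesis by simp
    qed
    have "LHS \<le> (1 / real (card G)) * (\<Sum>g\<in>G. real l * d + (\<Sum>i\<in>I. h i (g i)))"
      unfolding LHS_def using cG by (intro mult_left_mono sum_mono bound_g) auto
    also have "\<dots> = real l * d + 1 / real N * (\<Sum>i\<in>I. \<Sum>j\<in>J. h i j)"
      using cG by (simp add: sum.distrib avg field_simps)
    also have "\<dots> \<le> c / real N + c / real N"
    proof -
      have "1 / real N * (\<Sum>i\<in>I. \<Sum>j\<in>J. h i j) \<le> 1 / real N * c"
        using hsum N1 by (intro mult_left_mono) auto
      then show ?thesis using ld by simp
    qed
    finally show ?thesis by simp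
  qed
  have Sne: "S \<noteq> {}"
  proof -
    define c where "c = real m * (1 + (\<Sum>x\<in>I \<times> J. \<bar>(\<lambda>(i,j). a i j) x\<bar>))"
    have s0: "(\<Sum>x\<in>I \<times> J. \<bar>(\<lambda>(i,j). a i j) x\<bar>) \<ge> 0" by (rule sum_nonneg) auto
    have c0: "c > 0" unfolding c_def using m0 s0 by (intro mult_pos_pos) linarith+
    have "M_orl m (\<bar>(\<lambda>(i,j). a i j) x\<bar> / c) = 0" if x: "x \<in> I \<times> J" for x
    proof -
      have fin: "finite (I \<times> J)" by (simp add: I_def J_def)
      have "\<bar>(\<lambda>(i,j). a i j) x\<bar> \<le> (\<Sum>x\<in>I \<times> J. \<bar>(\<lambda>(i,j). a i j) x\<bar>)"
        by (rule member_le_sum) (use x fin in auto)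
      then have le: "\<bar>(\<lambda>(i,j). a i j) x\<bar> \<le> c / real m" using m0 by (simp add: c_def)
      have "\<bar>(\<lambda>(i,j). a i j) x\<bar> / c \<le> 1 / real m"
        using le c0 m0 by (simp add: field_simps)
      then show ?thesis by (simp add: M_orl_def)
    qed
    then have "c \<in> S" using c0 by (simp add: S_def)
    then show ?thesis by blast
  qed
  have "LHS * real N / 2 \<le> Inf S"
  proof (rule cInf_greatest[OF Sne])
    fix c assume "c \<in> S"
    from key[OF this] N1 show "LHS * real N / 2 \<le> c" by (simp add: field_simps)
  qed
  then have "LHS \<le> 2 / real N * Inf S" using N1 by (simp add: field_simps)
  then show ?thesis by (simp add: LHS_def S_def luxemburg_norm_def I_def J_def m_def)
qed

end
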